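(* Let $i\ge0$, let $\mathbf{e}_i$ be a 1-dimensional error pattern at level $i$, and let $\mathbf{e}_{i+2}$ be a 1-dimensional second preimage of $\mathbf{e}_i$, i.e. a pattern at level $i+2$ whose image after two successive reduction stages is $\mathbf{e}_i$. Then $\mathrm{wt}(\mathbf{e}_{i+2})\ge2\,\mathrm{wt}(\mathbf{e}_i)$.
   Context: 1-dimensional model. For $j\ge0$, the line at level $j$ is the cycle with vertex set $\mathbb{Z}/2^j\mathbb{Z}$ and edges $\{v,v+1\}$, $v\in\mathbb{Z}/2^j\mathbb{Z}$ (for $j=0$, one vertex with a loop edge). A 1-dimensional error pattern at level $j$ is a subset of these edges; $\mathrm{wt}$ is its number of edges; its syndrome is the set of vertices incident to an odd number of its edges. At level $j+1$, block $m\in\mathbb{Z}/2^j\mathbb{Z}$ consists of the left edge $\{2m,2m+1\}$ and right edge $\{2m+1,2m+2\}$ and corresponds to the edge $\{m,m+1\}$ at level $j$. One reduction stage applied to a pattern $\mathbf{f}$ at level $j+1$ with syndrome $S$: (a) for every block, if $2m+1,2m+2\in S$, flip (add mod 2) the right edge and remove both from $S$; (b) then for every block, if $2m+1$ is still in $S$, flip the left edge. In the resulting pattern $\mathbf{f}'$ each block contains $0$ or $2$ edges; the image of $\mathbf{f}$ is the pattern at level $j$ containing $\{m,m+1\}$ iff block $m\subseteq\mathbf{f}'$. *)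

theory Defs
  imports Main
begin

text \<open>Level j: the cycle with vertex set Z/2^j (represented by 0..<2^j).
  Edges are indexed by their left endpoint: edge v (v < 2^j) is {v, v+1 mod 2^j}.
  (Level 0: one vertex, one loop edge; level 1: two parallel edges.)
  A 1-dimensional error pattern at level j is a set of edge indices below 2^j.\<close>

definition is_pattern :: "nat \<Rightarrow> nat set \<Rightarrow> bool" where
  "is_pattern j f \<longleftrightarrow> f \<subseteq> {..<2^j}"

definition wt :: "nat set \<Rightarrow> nat" where
  "wt f = card f"

text \<open>Syndrome: vertices u incident to an odd number of edges of f; the edges
  incident to u are edge (u-1) and edge u (a loop counts twice).\<close>
definition syndrome :: "nat \<Rightarrow> nat set \<Rightarrow> nat set" where
  "syndrome j f = {u. u < 2^j \<and>
     odd ((if (u + 2^j - 1) mod 2^j \<in> f then 1 else 0) + (if u \<in> f then 1 else 0 :: nat))}"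

definition symdiff :: "nat set \<Rightarrow> nat set \<Rightarrow> nat set" where
  "symdiff A B = (A - B) \<union> (B - A)"

text \<open>One reduction stage applied to a pattern f at level j+1; block m < 2^j
  consists of left edge 2m = {2m,2m+1} and right edge 2m+1 = {2m+1,2m+2}.\<close>
definition stepA_blocks :: "nat \<Rightarrow> nat set \<Rightarrow> nat set" where
  "stepA_blocks j f = {m. m < 2^j \<and> 2*m+1 \<in> syndrome (Suc j) f
        \<and> (2*m+2) mod 2^(Suc j) \<in> syndrome (Suc j) f}"

definition syndrome_after_A :: "nat \<Rightarrow> nat set \<Rightarrow> nat set" where
  "syndrome_after_A j f = syndrome (Suc j) f
      - (\<Union>m\<in>stepA_blocks j f. {2*m+1, (2*m+2) mod 2^(Suc j)})"

definition stepB_blocks :: "nat \<Rightarrow> nat set \<Rightarrow> nat set" where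
  "stepB_blocks j f = {m. m < 2^j \<and> 2*m+1 \<in> syndrome_after_A j f}"

definition reduced :: "nat \<Rightarrow> nat set \<Rightarrow> nat set" where
  "reduced j f = symdiff f ((\<lambda>m. 2*m+1) ` stepA_blocks j f \<union> (\<lambda>m. 2*m) ` stepB_blocks j f)"

definition reduce :: "nat \<Rightarrow> nat set \<Rightarrow> nat set" where
  "reduce j f = {m. m < 2^j \<and> 2*m \<in> reduced j f \<and> 2*m+1 \<in> reduced j f}"

end

theory Submission
  imports Defs
begin

lemma odd_neq_even [simp]: "Suc (2*x) \<noteq> 2*(y::nat)" "2*y \<noteq> Suc (2*(x::nat))"
  by presburger+

lemma keyQ:
  assumes m: "m \<in> reduce j f"
  shows "(2*m \<in> f \<and> 2*m+1 \<in> f) \<or>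
         ((2*m \<in> f \<or> 2*m+1 \<in> f) \<and> (2*m+2) mod 2^(Suc j) \<in> f)"
proof -
  define M where "M = (2::nat)^(Suc j)"
  have mlt: "m < 2^j" and r0: "2*m \<in> reduced j f" and r1: "2*m+1 \<in> reduced j f"
    using m by (auto simp: reduce_def)
  have M2: "2*m+2 \<le> M" using mlt by (simp add: M_def)
  define u where "u = (2*m+2) mod M"
  have ult: "u < M" using M2 by (simp add: u_def M_def)
  have pred: "(u + M - 1) mod M = 2*m+1"
  proof (cases "2*m+2 = M")
    case True then show ?thesis by (simp add: u_def)
  next
    case False then have "u = 2*m+2" using M2 by (simp add: u_def)
    then have "u + M - 1 = (2*m+1) + M" by simp
    moreover have "(2*m+1) < M" using M2 by simp
    ultimately show ?thesis by (metis mod_add_self2 mod_less)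
  qed
  have pred1: "(2*m+1 + M - 1) mod M = 2*m"
  proof -
    have "2*m+1 + M - 1 = 2*m + M" by simp
    moreover have "2*m < M" using M2 by simp
    ultimately show ?thesis by (metis mod_add_self2 mod_less)
  qed
  have S_u: "u \<in> syndrome (Suc j) f \<longleftrightarrow> odd ((if 2*m+1 \<in> f then 1 else 0) + (if u \<in> f then 1 else 0::nat))"
    using ult pred unfolding syndrome_def M_def[symmetric] by simp
  have S_1: "2*m+1 \<in> syndrome (Suc j) f \<longleftrightarrow> odd ((if 2*m \<in> f then 1 else 0) + (if 2*m+1 \<in> f then 1 else 0::nat))"
    using M2 pred1 unfolding syndrome_def M_def[symmetric] by simp
  have F0: "2*m \<in> (\<lambda>m. 2*m+1) ` stepA_blocks j f \<union> (\<lambda>m. 2*m) ` stepB_blocks j f \<longleftrightarrow> m \<in> stepB_blocks j f"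
    by (auto; presburger)
  have F1: "2*m+1 \<in> (\<lambda>m. 2*m+1) ` stepA_blocks j f \<union> (\<lambda>m. 2*m) ` stepB_blocks j f \<longleftrightarrow> m \<in> stepA_blocks j f"
    by (auto; presburger)
  have AB: "m \<in> stepA_blocks j f \<Longrightarrow> m \<notin> stepB_blocks j f"
    by (auto simp: stepB_blocks_def syndrome_after_A_def)
  have A: "m \<in> stepA_blocks j f \<longleftrightarrow> 2*m+1 \<in> syndrome (Suc j) f \<and> u \<in> syndrome (Suc j) f"
    using mlt by (simp add: stepA_blocks_def u_def M_def)
  have R0: "2*m \<in> f \<longleftrightarrow> m \<notin> stepB_blocks j f"
    using r0 F0 by (auto simp: reduced_def symdiff_def)
  have R1: "2*m+1 \<in> f \<longleftrightarrow> m \<notin> stepA_blocks j f"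
    using r1 F1 by (auto simp: reduced_def symdiff_def)
  show ?thesis
  proof (cases "m \<in> stepA_blocks j f")
    case True
    then show ?thesis using AB R0 R1 A S_u unfolding u_def M_def by (auto split: if_splits)
  next
    case False
    show ?thesis
    proof (cases "m \<in> stepB_blocks j f")
      case True
      then have "2*m \<notin> f" "2*m+1 \<in> f" using R0 R1 False by auto
      then have "2*m+1 \<in> syndrome (Suc j) f" using S_1 by simp
      then have "u \<notin> syndrome (Suc j) f" using A False by simp
      then have "u \<in> f" using S_u \<open>2*m+1 \<in> f\<close> by (simp split: if_splits)
      then show ?thesis using \<open>2*m+1 \<in> f\<close> unfolding u_def M_def by simp
    next
      case False2: False
      then show ?thesis using R0 R1 False by simp
    qed
  qed
qed

lemma stage1:
  fixes N :: nat and g f :: "nat set"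
  assumes N: "N > 0" and gN: "g \<subseteq> {..<N}" and fin: "finite f"
    and Q: "\<And>k. k \<in> g \<Longrightarrow> (2*k \<in> f \<and> 2*k+1 \<in> f) \<or>
         ((2*k \<in> f \<or> 2*k+1 \<in> f) \<and> (2*k+2) mod (2*N) \<in> f)"
  shows "card {k. k < N \<and> (k \<in> g \<or> (k+N-1) mod N \<in> g)} \<le> card f"
proof -
  define U where "U = {k. k < N \<and> (k \<in> g \<or> (k+N-1) mod N \<in> g)}"
  define p where "p k = (k+N-1) mod N" for k
  define phi where "phi k = (if k \<in> g then (if 2*k \<in> f then 2*k else 2*k+1)
      else (if 2*p k \<in> f \<and> 2*p k+1 \<in> f then 2*p k+1 else 2*k))" for k
  have pform: "k < N \<Longrightarrow> p k = (if k = 0 then N-1 else k-1)" for k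
  proof -
    assume kN: "k < N"
    show ?thesis
    proof (cases "k = 0")
      case True then show ?thesis using N by (simp add: p_def)
    next
      case False
      then have "k+N-1 = (k-1) + N" using N by simp
      moreover have "k-1 < N" using kN by simp
      ultimately show ?thesis using False unfolding p_def by (metis mod_add_self2 mod_less)
    qed
  qed
  have pk: "k < N \<Longrightarrow> (p k + 1) mod N = k" for k
    using pform[of k] N by (cases "k = 0") auto
  have pk2: "k < N \<Longrightarrow> (2 * p k + 2) mod (2*N) = 2*k" for k
  proof -
    assume "k < N"
    have "2 * p k + 2 = 2 * (p k + 1)" by simp
    then have "(2 * p k + 2) mod (2*N) = 2 * ((p k + 1) mod N)"
      by (simp only: mod_mult_mult1)
    then show ?thesis using pk[OF \<open>k<N\<close>] by simp
  qed
  have img: "phi ` U \<subseteq> f"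
  proof
    fix x assume "x \<in> phi ` U"
    then obtain k where k: "k \<in> U" "x = phi k" by auto
    show "x \<in> f"
    proof (cases "k \<in> g")
      case True then show ?thesis using Q[OF True] k by (auto simp: phi_def)
    next
      case False
      then have "p k \<in> g" "k < N" using k by (auto simp: U_def p_def)
      then show ?thesis using Q[OF \<open>p k \<in> g\<close>] k False pk2 by (auto simp: phi_def)
    qed
  qed
  have phic: "phi k = 2*k \<or> (phi k = 2*k+1 \<and> k \<in> g \<and> 2*k \<notin> f) \<or>
      (phi k = 2*p k+1 \<and> k \<notin> g \<and> 2*p k \<in> f \<and> 2*p k+1 \<in> f)" for k
    unfolding phi_def by auto
  have inj: "inj_on phi U"
  proof (rule inj_onI)
    fix a b assume a: "a \<in> U" and b: "b \<in> U" and e: "phi a = phi b"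
    have aN: "a < N" and bN: "b < N" using a b by (auto simp: U_def)
    have ppk: "p a = p b \<Longrightarrow> a = b"
    proof -
      assume "p a = p b"
      then have "(p a + 1) mod N = (p b + 1) mod N" by simp
      then show "a = b" using pk[OF aN] pk[OF bN] by simp
    qed
    show "a = b"
      using phic[of a] phic[of b]
    proof (elim disjE conjE)
      assume "phi a = 2*a" "phi b = 2*b"
      then have "2*a = 2*b" using e by linarith
      then show ?thesis by presburger
    next
      assume "phi a = 2*a" "phi b = 2*b+1"
      then have "2*a = 2*b+1" using e by linarith
      then show ?thesis by presburger
    next
      assume "phi a = 2*a" "phi b = 2*p b+1"
      then have "2*a = 2*p b+1" using e by linarith
      then show ?thesis by presburger
    next
      assume "phi a = 2*a+1" "phi b = 2*b"
      then have "2*a+1 = 2*b" using e by linarith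
      then show ?thesis by presburger
    next
      assume "phi a = 2*a+1" "phi b = 2*b+1"
      then have "2*a+1 = 2*b+1" using e by linarith
      then show ?thesis by presburger
    next
      assume A: "phi a = 2*a+1" "2*a \<notin> f" and B: "phi b = 2*p b+1" "2*p b \<in> f"
      then have "2*a+1 = 2*p b+1" using e by linarith
      then have "a = p b" by presburger
      then show ?thesis using A B by simp
    next
      assume "phi a = 2*p a+1" "phi b = 2*b"
      then have "2*p a+1 = 2*b" using e by linarith
      then show ?thesis by presburger
    next
      assume A: "phi a = 2*p a+1" "2*p a \<in> f" and B: "phi b = 2*b+1" "2*b \<notin> f"
      then have "2*p a+1 = 2*b+1" using e by linarith
      then have "b = p a" by presburger
      then show ?thesis using A B by simp
    next
      assume "phi a = 2*p a+1" "phi b = 2*p b+1"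
      then have "2*p a+1 = 2*p b+1" using e by linarith
      then have "p a = p b" by presburger
      then show ?thesis by (rule ppk)
    qed
  qed
  have "card U \<le> card f" using card_inj_on_le[OF inj img fin] .
  then show ?thesis by (simp add: U_def)
qed

lemma stage2:
  fixes N :: nat and g h :: "nat set"
  assumes N: "N = 2*K" and hK: "h \<subseteq> {..<K}"
    and Q: "\<And>m. m \<in> h \<Longrightarrow> (2*m \<in> g \<and> 2*m+1 \<in> g) \<or>
         ((2*m \<in> g \<or> 2*m+1 \<in> g) \<and> (2*m+2) mod N \<in> g)"
  shows "2 * card h \<le> card {k. k < N \<and> (k \<in> g \<or> (k+N-1) mod N \<in> g)}"
proof -
  define U where "U = {k. k < N \<and> (k \<in> g \<or> (k+N-1) mod N \<in> g)}"
  define psi where "psi = (\<lambda>(m::nat, b::bool). if b then (2*m+2) mod N else 2*m+1)"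
  have finU: "finite U" by (simp add: U_def)
  have img: "psi ` (h \<times> UNIV) \<subseteq> U"
  proof
    fix x assume "x \<in> psi ` (h \<times> UNIV)"
    then obtain m b where mb: "m \<in> h" "x = psi (m, b)" by auto
    have mK: "2*m+2 \<le> N" using mb hK N by auto
    have p1: "(2*m+1 + N - 1) mod N = 2*m"
    proof -
      have "2*m+1 + N - 1 = 2*m + N" by simp
      moreover have "2*m < N" using mK by simp
      ultimately show ?thesis by (metis mod_add_self2 mod_less)
    qed
    have p2: "((2*m+2) mod N + N - 1) mod N = 2*m+1"
    proof (cases "2*m+2 = N")
      case True then show ?thesis by simp
    next
      case False
      then have "(2*m+2) mod N + N - 1 = (2*m+1) + N" using mK by simp
      moreover have "(2*m+1) < N" using mK by simp
      ultimately show ?thesis by (metis mod_add_self2 mod_less)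
    qed
    have lt: "(2*m+2) mod N < N" using mK by simp
    show "x \<in> U"
      using Q[OF mb(1)] mb mK p1 p2 lt by (cases b) (auto simp: U_def psi_def)
  qed
  have inj: "inj_on psi (h \<times> UNIV)"
  proof (rule inj_onI)
    fix x y assume x: "x \<in> h \<times> UNIV" and y: "y \<in> h \<times> UNIV" and e: "psi x = psi y"
    obtain m b where xm: "x = (m,b)" by fastforce
    obtain m' b' where ym: "y = (m',b')" by fastforce
    have mK: "m < K" "m' < K" using x y hK xm ym by auto
    have md: "(2*m+2) mod N = (if m+1 = K then 0 else 2*m+2)"
      "(2*m'+2) mod N = (if m'+1 = K then 0 else 2*m'+2)" using mK N by auto
    show "x = y"
      using e md unfolding xm ym psi_def by (cases b; cases b') (auto split: if_splits)
  qed
  have "card (h \<times> (UNIV::bool set)) \<le> card U" using card_inj_on_le[OF inj img finU] .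
  moreover have "finite h" using hK finite_subset by blast
  ultimately show ?thesis by (simp add: U_def card_cartesian_product)
qed

theorem lemma3:
  fixes i :: nat and e e2 :: "nat set"
  assumes "is_pattern i e"
    and "is_pattern (i+2) e2"
    and "reduce i (reduce (Suc i) e2) = e"
  shows "wt e2 \<ge> 2 * wt e"
proof -
  define g where "g = reduce (Suc i) e2"
  have gN: "g \<subseteq> {..<2^Suc i}" by (auto simp: g_def reduce_def)
  have fin: "finite e2" using assms(2) by (auto simp: is_pattern_def intro: finite_subset)
  have "card {k. k < 2^Suc i \<and> (k \<in> g \<or> (k+2^Suc i-1) mod 2^Suc i \<in> g)} \<le> card e2"
    apply (rule stage1[OF _ gN fin])
     apply simp
    using keyQ[of _ "Suc i" e2] unfolding g_def by simp
  moreover have "2 * card e \<le> card {k. k < 2^Suc i \<and> (k \<in> g \<or> (k+2^Suc i-1) mod 2^Suc i \<in> g)}"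
    apply (rule stage2[of _ "2^i"])
      apply simp
    using assms(3) apply (auto simp: reduce_def g_def)[1]
    using keyQ[of _ i g] assms(3) unfolding g_def by simp
  ultimately show ?thesis by (simp add: wt_def)
qed

end
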